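(* Let $X$ be a $d$-dimensional Minkowski space whose closed unit ball is a polytope. Then $X$ contains an M-set of cardinality at least $d+1$; in particular $m(X)\geq d+1$.
   Context: A Minkowski space is a finite-dimensional real normed space $(X,\|\cdot\|)$. For a set $S\subseteq X$, its midpoint set is $M(S)=\{\tfrac12(x+y): x,y\in S,\ x\neq y\}$. A set $S\subseteq X$ is an M-set if every vector in $M(S)$ has norm exactly $1$ and every vector in $S$ has norm strictly greater than $1$. $m(X)$ denotes the largest cardinality of an M-set in $X$ if such a largest finite cardinality exists, and $m(X)=\infty$ otherwise. *)

theory Defs
  imports "HOL-Analysis.Analysis" "HOL-Library.Extended_Nat"
begin

text \<open>A norm on a finite-dimensional real vector space (given as a euclidean_space type,
  whose Euclidean norm is ignored): the Minkowski space is the pair (type, nrm).\<close>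
definition is_norm :: "('a::real_vector \<Rightarrow> real) \<Rightarrow> bool" where
  "is_norm nrm \<longleftrightarrow>
     (\<forall>x. nrm x = 0 \<longleftrightarrow> x = 0) \<and>
     (\<forall>x. nrm x \<ge> 0) \<and>
     (\<forall>x y. nrm (x + y) \<le> nrm x + nrm y) \<and>
     (\<forall>c x. nrm (scaleR c x) = \<bar>c\<bar> * nrm x)"

definition midpoint_set :: "'a::real_vector set \<Rightarrow> 'a set" where
  "midpoint_set S = {scaleR (1/2) (x + y) | x y. x \<in> S \<and> y \<in> S \<and> x \<noteq> y}"

definition is_Mset :: "('a::real_vector \<Rightarrow> real) \<Rightarrow> 'a set \<Rightarrow> bool" where
  "is_Mset nrm S \<longleftrightarrow> (\<forall>z \<in> midpoint_set S. nrm z = 1) \<and> (\<forall>x \<in> S. nrm x > 1)"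

text \<open>m(X): the supremum of cardinalities of finite M-sets (\<infinity> if unbounded;
  this equals the largest cardinality of an M-set when it exists).\<close>
definition m_X :: "('a::real_vector \<Rightarrow> real) \<Rightarrow> enat" where
  "m_X nrm = Sup {enat (card S) | S. finite S \<and> is_Mset nrm S}"

end

theory Submission
  imports Defs
begin


lemma small_t:
  fixes \<alpha> \<beta> :: "'b \<Rightarrow> real"
  assumes "finite Q" "\<forall>a\<in>Q. \<alpha> a \<le> 1 \<and> (\<beta> a \<le> 0 \<or> \<alpha> a < 1)"
  shows "\<exists>t>0. \<forall>s. 0 \<le> s \<and> s \<le> t \<longrightarrow> (\<forall>a\<in>Q. \<alpha> a + s * \<beta> a \<le> 1)"
  using assms
proof (induction Q rule: finite_induct)
  case empty
  then show ?case by (intro exI[of _ 1]) auto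
next
  case (insert q Q)
  then obtain t1 where t1: "t1 > 0" "\<forall>s. 0 \<le> s \<and> s \<le> t1 \<longrightarrow> (\<forall>a\<in>Q. \<alpha> a + s * \<beta> a \<le> 1)"
    by auto
  have hq: "\<alpha> q \<le> 1" "\<beta> q \<le> 0 \<or> \<alpha> q < 1" using insert.prems by auto
  define t2 where "t2 = (if \<beta> q \<le> 0 then 1 else (1 - \<alpha> q) / \<beta> q)"
  have t2: "t2 > 0" using hq by (auto simp: t2_def)
  have q2: "\<alpha> q + s * \<beta> q \<le> 1" if "0 \<le> s" "s \<le> t2" for s
  proof (cases "\<beta> q \<le> 0")
    case True
    then show ?thesis using hq that by (metis add_le_same_cancel1 mult_nonneg_nonpos order_trans add_mono_thms_linordered_semiring(1) mult_le_0_iff)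
  next
    case False
    then have "s * \<beta> q \<le> t2 * \<beta> q" using that by (intro mult_right_mono) auto
    also have "t2 * \<beta> q = 1 - \<alpha> q" using False by (simp add: t2_def)
    finally show ?thesis by simp
  qed
  show ?case
    using t1 t2 q2 by (intro exI[of _ "min t1 t2"]) auto
qed



lemma isn_zero: "is_norm nrm \<Longrightarrow> nrm 0 = 0" by (simp add: is_norm_def)
lemma isn_scale: "is_norm nrm \<Longrightarrow> nrm (c *\<^sub>R x) = \<bar>c\<bar> * nrm x" by (simp add: is_norm_def)
lemma isn_neg: "is_norm nrm \<Longrightarrow> nrm (- x) = nrm x"
  using isn_scale[of nrm "-1" x] by simp
lemma isn_pos: "is_norm nrm \<Longrightarrow> x \<noteq> 0 \<Longrightarrow> nrm x > 0"
proof -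
  assume N: "is_norm nrm" and x: "x \<noteq> 0"
  have "nrm x \<ge> 0" using N by (simp add: is_norm_def)
  moreover have "nrm x \<noteq> 0" using N x by (simp add: is_norm_def)
  ultimately show ?thesis by simp
qed

lemma rep_exists:
  fixes nrm :: "'a::euclidean_space \<Rightarrow> real"
  assumes N: "is_norm nrm" and P: "polytope {x. nrm x \<le> 1}"
  shows "\<exists>A. finite A \<and> (\<forall>x. nrm x \<le> 1 \<longleftrightarrow> (\<forall>a\<in>A. a \<bullet> x \<le> 1))"
proof -
  have "polyhedron {x. nrm x \<le> 1}" using P by (rule polytope_imp_polyhedron)
  then obtain F where F: "finite F" "{x. nrm x \<le> 1} = \<Inter>F"
      "\<forall>h\<in>F. \<exists>a b. a \<noteq> 0 \<and> h = {x. a \<bullet> x \<le> b}"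
    unfolding polyhedron_def by blast
  have "\<forall>h\<in>F. \<exists>p. fst p \<noteq> 0 \<and> (\<forall>x. x \<in> h \<longleftrightarrow> fst p \<bullet> x \<le> snd p)"
  proof
    fix h assume "h \<in> F"
    then obtain a b where "a \<noteq> 0" "h = {x. a \<bullet> x \<le> b}" using F(3) by blast
    then show "\<exists>p. fst p \<noteq> 0 \<and> (\<forall>x. x \<in> h \<longleftrightarrow> fst p \<bullet> x \<le> snd p)"
      by (intro exI[of _ "(a, b)"]) simp
  qed
  then obtain g where g: "\<forall>h\<in>F. fst (g h) \<noteq> 0 \<and> (\<forall>x. x \<in> h \<longleftrightarrow> fst (g h) \<bullet> x \<le> snd (g h))"
    by (rule bchoice[THEN exE]) blast
  define av where "av = (\<lambda>h. fst (g h))"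
  define bv where "bv = (\<lambda>h. snd (g h))"
  have ab: "\<forall>h\<in>F. av h \<noteq> 0 \<and> (\<forall>x. x \<in> h \<longleftrightarrow> av h \<bullet> x \<le> bv h)" using g by (simp add: av_def bv_def)
  have bpos: "bv h > 0" if h: "h \<in> F" for h
  proof (rule ccontr)
    assume "\<not> bv h > 0"
    define y where "y = (1 / nrm (av h)) *\<^sub>R av h"
    have np: "nrm (av h) > 0" using isn_pos[OF N] ab h by auto
    have "nrm y = 1" using np by (simp add: y_def isn_scale[OF N])
    then have "y \<in> {x. nrm x \<le> 1}" by simp
    then have "y \<in> \<Inter>F" using F(2) by simp
    then have "y \<in> h" using h by blast
    then have "av h \<bullet> y \<le> bv h" using ab h by auto
    moreover have "av h \<bullet> y > 0" using np ab h by (simp add: y_def)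
    ultimately show False using \<open>\<not> bv h > 0\<close> by simp
  qed
  define A where "A = (\<lambda>h. (1 / bv h) *\<^sub>R av h) ` F"
  have "nrm x \<le> 1 \<longleftrightarrow> (\<forall>a\<in>A. a \<bullet> x \<le> 1)" for x
  proof -
    have "nrm x \<le> 1 \<longleftrightarrow> x \<in> {x. nrm x \<le> 1}" by simp
    also have "\<dots> \<longleftrightarrow> x \<in> \<Inter>F" using F(2) by simp
    also have "\<dots> \<longleftrightarrow> (\<forall>h\<in>F. x \<in> h)" by blast
    also have "\<dots> \<longleftrightarrow> (\<forall>h\<in>F. av h \<bullet> x \<le> bv h)" using ab by blast
    also have "\<dots> \<longleftrightarrow> (\<forall>h\<in>F. ((1 / bv h) *\<^sub>R av h) \<bullet> x \<le> 1)"
      using bpos by (auto simp: divide_le_eq)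
    finally show ?thesis by (simp add: A_def)
  qed
  moreover have "finite A" using F(1) by (simp add: A_def)
  ultimately show ?thesis by blast
qed

lemma rep_minimal:
  fixes nrm :: "'a::euclidean_space \<Rightarrow> real"
  assumes "\<exists>A. finite A \<and> (\<forall>x. nrm x \<le> 1 \<longleftrightarrow> (\<forall>a\<in>A. a \<bullet> x \<le> (1::real)))"
  shows "\<exists>A. finite A \<and> (\<forall>x. nrm x \<le> 1 \<longleftrightarrow> (\<forall>a\<in>A. a \<bullet> x \<le> 1)) \<and>
     (\<forall>f\<in>A. \<not> (\<forall>x. nrm x \<le> 1 \<longleftrightarrow> (\<forall>a\<in>A - {f}. a \<bullet> x \<le> 1)))"
proof -
  let ?R = "\<lambda>A. finite A \<and> (\<forall>x. nrm x \<le> 1 \<longleftrightarrow> (\<forall>a\<in>A. a \<bullet> x \<le> (1::real)))"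
  have "\<exists>n. \<exists>A. ?R A \<and> card A = n" using assms by blast
  then obtain n where n: "\<exists>A. ?R A \<and> card A = n" and least: "\<And>m. m < n \<Longrightarrow> \<not> (\<exists>A. ?R A \<and> card A = m)"
    using exists_least_iff[of "\<lambda>n. \<exists>A. ?R A \<and> card A = n"] by blast
  then obtain A where A: "?R A" "card A = n" by blast
  have "\<not> (\<forall>x. nrm x \<le> 1 \<longleftrightarrow> (\<forall>a\<in>A - {f}. a \<bullet> x \<le> 1))" if "f \<in> A" for f
  proof
    assume h: "\<forall>x. nrm x \<le> 1 \<longleftrightarrow> (\<forall>a\<in>A - {f}. a \<bullet> x \<le> 1)"
    have "card (A - {f}) < n" using A that by (metis card_Diff1_less)
    moreover have "?R (A - {f})" using h A by auto
    ultimately show False using least[of "card (A - {f})"] by blast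
  qed
  then show ?thesis using A by blast
qed



locale msetup =
  fixes nrm :: "'a::euclidean_space \<Rightarrow> real" and A :: "'a set" and f :: 'a and z :: 'a
  assumes N: "is_norm nrm" and finA: "finite A"
    and rep: "\<And>x. nrm x \<le> 1 \<longleftrightarrow> (\<forall>a\<in>A. a \<bullet> x \<le> 1)"
    and fA: "f \<in> A" and fz: "f \<bullet> z = 1" and zA: "\<And>a. a \<in> A \<Longrightarrow> a \<noteq> f \<Longrightarrow> a \<bullet> z < 1"
    and dim2: "2 \<le> DIM('a)" and bnd: "bounded {x. nrm x \<le> 1}"

context msetup
begin

definition Pr :: "'a \<Rightarrow> 'a" where "Pr a = a - ((a \<bullet> f) / (f \<bullet> f)) *\<^sub>R f"

definition Sf :: "('a \<times> real) set" where
  "Sf = {p. f \<bullet> fst p = 1 \<and> 0 \<le> snd p \<and> (\<forall>a\<in>A. a \<bullet> fst p + snd p * norm (Pr a) \<le> 1)}"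

lemma f_nz: "f \<noteq> 0" using fz by auto

lemma lge: "a \<in> A \<Longrightarrow> a \<bullet> x \<le> nrm x"
proof (cases "x = 0")
  case True then show ?thesis using isn_zero[OF N] by simp
next
  case False
  assume a: "a \<in> A"
  have np: "nrm x > 0" using isn_pos[OF N False] .
  define y where "y = (1 / nrm x) *\<^sub>R x"
  have "nrm y = 1" using np by (simp add: y_def isn_scale[OF N])
  then have "nrm y \<le> 1" by simp
  then have "a \<bullet> y \<le> 1" using rep a by blast
  then show ?thesis using np by (simp add: y_def divide_le_eq)
qed

lemma Pr_f: "Pr f = 0" using f_nz by (simp add: Pr_def)

lemma f_Pr: "f \<bullet> Pr a = 0"
  using f_nz by (simp add: Pr_def inner_diff_right inner_commute)

lemma Pr_inner: "f \<bullet> v = 0 \<Longrightarrow> a \<bullet> v = Pr a \<bullet> v"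
  by (simp add: Pr_def inner_diff_left inner_commute[of v f])

lemma ball_one:
  assumes cr: "(c, r) \<in> Sf" and v: "f \<bullet> v = 0" "norm v \<le> r"
  shows "nrm (c + v) = 1"
proof -
  have "a \<bullet> (c + v) \<le> 1" if a: "a \<in> A" for a
  proof -
    have "a \<bullet> (c + v) = a \<bullet> c + Pr a \<bullet> v" using Pr_inner[OF v(1)] by (simp add: inner_add_right)
    also have "\<dots> \<le> a \<bullet> c + norm (Pr a) * norm v" using norm_cauchy_schwarz by simp
    also have "\<dots> \<le> a \<bullet> c + r * norm (Pr a)" using v(2) by (simp add: mult_right_mono mult.commute)
    also have "\<dots> \<le> 1" using cr a by (auto simp: Sf_def)
    finally show ?thesis .
  qed
  then have "nrm (c + v) \<le> 1" using rep by auto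
  moreover have "f \<bullet> (c + v) = 1" using cr v by (simp add: Sf_def inner_add_right)
  then have "1 \<le> nrm (c + v)" using lge[OF fA, of "c + v"] by simp
  ultimately show ?thesis by simp
qed

lemma Sf_closed: "closed Sf"
proof -
  have "Sf = {p. f \<bullet> fst p = 1} \<inter> ({p. 0 \<le> snd p} \<inter> (\<Inter>a\<in>A. {p. a \<bullet> fst p + snd p * norm (Pr a) \<le> 1}))"
    by (auto simp: Sf_def)
  moreover have "closed {p::'a\<times>real. f \<bullet> fst p = 1}"
    by (rule closed_Collect_eq) (auto intro!: continuous_intros)
  moreover have "closed {p::'a\<times>real. 0 \<le> snd p}"
    by (rule closed_Collect_le) (auto intro!: continuous_intros)
  moreover have "closed {p::'a\<times>real. a \<bullet> fst p + snd p * norm (Pr a) \<le> 1}" for a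
    by (rule closed_Collect_le) (auto intro!: continuous_intros)
  ultimately show ?thesis by (auto intro!: closed_Int closed_INT)
qed

lemma Sf_bounded: "bounded Sf"
proof -
  obtain R where R: "\<And>x. nrm x \<le> 1 \<Longrightarrow> norm x \<le> R" using bnd unfolding bounded_iff by auto
  obtain w where w: "w \<noteq> 0" "orthogonal f w" using orthogonal_to_vector_exists[OF dim2] by blast
  define w1 where "w1 = (1 / norm w) *\<^sub>R w"
  have w1: "norm w1 = 1" "f \<bullet> w1 = 0" using w by (auto simp: w1_def orthogonal_def)
  have "norm p \<le> 3 * R" if p: "p \<in> Sf" for p
  proof -
    obtain c r where cr: "p = (c, r)" by (cases p)
    have r0: "0 \<le> r" using p cr by (auto simp: Sf_def)
    have "nrm (c + 0) = 1" using ball_one[of c r 0] p cr r0 by simp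
    then have nc: "norm c \<le> R" using R by simp
    have "nrm (c + r *\<^sub>R w1) = 1" using ball_one[of c r "r *\<^sub>R w1"] p cr r0 w1 by simp
    then have ncw: "norm (c + r *\<^sub>R w1) \<le> R" using R by simp
    have "r = norm (r *\<^sub>R w1)" using w1 r0 by simp
    also have "\<dots> = norm ((c + r *\<^sub>R w1) - c)" by simp
    also have "\<dots> \<le> norm (c + r *\<^sub>R w1) + norm c" by (rule norm_triangle_ineq4)
    finally have "r \<le> 2 * R" using nc ncw by simp
    have "norm p \<le> norm c + norm r" unfolding cr by (rule norm_Pair_le)
    then show ?thesis using nc \<open>r \<le> 2 * R\<close> r0 by simp
  qed
  then show ?thesis unfolding bounded_iff by blast
qed

lemma Sf_compact: "compact Sf"
  using Sf_closed Sf_bounded by (simp add: compact_eq_bounded_closed)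

lemma exists_pos: "\<exists>t>0. (z, t) \<in> Sf"
proof -
  have "\<forall>a\<in>A. a \<bullet> z \<le> 1 \<and> (norm (Pr a) \<le> 0 \<or> a \<bullet> z < 1)"
  proof
    fix a assume a: "a \<in> A"
    show "a \<bullet> z \<le> 1 \<and> (norm (Pr a) \<le> 0 \<or> a \<bullet> z < 1)"
    proof (cases "a = f")
      case True then show ?thesis using fz Pr_f by simp
    next
      case False then show ?thesis using zA[OF a] by simp
    qed
  qed
  then obtain t where t: "t > 0" "\<forall>s. 0 \<le> s \<and> s \<le> t \<longrightarrow> (\<forall>a\<in>A. a \<bullet> z + s * norm (Pr a) \<le> 1)"
    using small_t[OF finA, of "\<lambda>a. a \<bullet> z" "\<lambda>a. norm (Pr a)"] by blast
  then have "(z, t) \<in> Sf" using fz by (auto simp: Sf_def)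
  then show ?thesis using t by blast
qed

lemma exists_opt: "\<exists>c r. (c, r) \<in> Sf \<and> r > 0 \<and> (\<forall>c' r'. (c', r') \<in> Sf \<longrightarrow> r' \<le> r)
   \<and> (\<forall>c'. (c', r) \<in> Sf \<longrightarrow> norm c' \<le> norm c)"
proof -
  obtain t where t: "t > 0" "(z, t) \<in> Sf" using exists_pos by blast
  have "Sf \<noteq> {}" using t by blast
  moreover have "continuous_on Sf snd" by (intro continuous_intros)
  ultimately obtain p0 where p0: "p0 \<in> Sf" "\<forall>q\<in>Sf. snd q \<le> snd p0"
    using continuous_attains_sup[OF Sf_compact, of snd] by blast
  define r where "r = snd p0"
  have rpos: "r > 0" using p0(2) t unfolding r_def by force
  define \<Omega> where "\<Omega> = fst ` (Sf \<inter> {q. snd q = r})"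
  have "closed {q::'a\<times>real. snd q = r}" by (rule closed_Collect_eq) (auto intro!: continuous_intros)
  then have "compact (Sf \<inter> {q. snd q = r})" using Sf_compact by blast
  then have cO: "compact \<Omega>" unfolding \<Omega>_def by (intro compact_continuous_image) (auto intro: continuous_intros)
  have "fst p0 \<in> \<Omega>" using p0 by (auto simp: \<Omega>_def r_def)
  moreover have "continuous_on \<Omega> norm" by (intro continuous_intros)
  ultimately obtain c where c: "c \<in> \<Omega>" "\<forall>c'\<in>\<Omega>. norm c' \<le> norm c"
    using continuous_attains_sup[OF cO, of norm] by blast
  have "(c, r) \<in> Sf" using c(1) by (auto simp: \<Omega>_def)
  moreover have "\<forall>c' r'. (c', r') \<in> Sf \<longrightarrow> r' \<le> r" using p0 by (force simp: r_def)
  moreover have "\<forall>c'. (c', r) \<in> Sf \<longrightarrow> norm c' \<le> norm c"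
  proof (intro allI impI)
    fix c' assume "(c', r) \<in> Sf"
    then have "c' \<in> \<Omega>" unfolding \<Omega>_def by (force intro: image_eqI[of _ _ "(c', r)"])
    then show "norm c' \<le> norm c" using c by blast
  qed
  ultimately show ?thesis using rpos by blast
qed

end


context msetup
begin

lemma key:
  assumes cr: "(c, r) \<in> Sf" "r > 0"
    and rmax: "\<And>c' r'. (c', r') \<in> Sf \<Longrightarrow> r' \<le> r"
    and cmax: "\<And>c'. (c', r) \<in> Sf \<Longrightarrow> norm c' \<le> norm c"
  defines "T \<equiv> {a\<in>A. Pr a \<noteq> 0 \<and> a \<bullet> c + r * norm (Pr a) = 1}"
  defines "U \<equiv> (\<lambda>a. (1 / norm (Pr a)) *\<^sub>R Pr a) ` T"
  shows "DIM('a) \<le> card U"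
proof (rule ccontr)
  assume small: "\<not> DIM('a) \<le> card U"
  have finU: "finite U" using finA by (simp add: U_def T_def)
  have Uf: "f \<bullet> u = 0" if "u \<in> U" for u
    using that f_Pr by (auto simp: U_def)
  have feas: "a \<bullet> c + r * norm (Pr a) \<le> 1" if "a \<in> A" for a
    using cr that by (auto simp: Sf_def)
  have fc: "f \<bullet> c = 1" using cr by (auto simp: Sf_def)
  have Tdec: "\<exists>u\<in>U. Pr a = norm (Pr a) *\<^sub>R u" if "a \<in> T" for a
  proof
    show "(1 / norm (Pr a)) *\<^sub>R Pr a \<in> U" using that by (simp add: U_def)
    show "Pr a = norm (Pr a) *\<^sub>R ((1 / norm (Pr a)) *\<^sub>R Pr a)" using that by (simp add: T_def)
  qed
  show False
  proof (cases "span (insert f U) = UNIV")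
    case False
    have "dim (insert f U) \<noteq> DIM('a)" using False dim_eq_full by blast
    then have "dim (insert f U) < DIM('a)" using dim_subset_UNIV[of "insert f U"] by simp
    then obtain \<delta> where \<delta>: "\<delta> \<noteq> 0" "\<And>y. y \<in> span (insert f U) \<Longrightarrow> orthogonal \<delta> y"
      using orthogonal_to_subspace_exists by blast
    have fd: "f \<bullet> \<delta> = 0" using \<delta>(2)[of f] by (simp add: span_base orthogonal_def inner_commute)
    have ud: "u \<bullet> \<delta> = 0" if "u \<in> U" for u
      using \<delta>(2)[of u] that by (simp add: span_base orthogonal_def inner_commute)
    have cond: "\<forall>a\<in>A. a \<bullet> c + r * norm (Pr a) \<le> 1 \<and> (g a \<le> 0 \<or> a \<bullet> c + r * norm (Pr a) < 1)"
      if g: "\<And>a. g a = a \<bullet> \<delta> \<or> g a = - (a \<bullet> \<delta>)" for g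
    proof
      fix a assume a: "a \<in> A"
      have ad: "a \<bullet> \<delta> = Pr a \<bullet> \<delta>" using Pr_inner[OF fd] .
      show "a \<bullet> c + r * norm (Pr a) \<le> 1 \<and> (g a \<le> 0 \<or> a \<bullet> c + r * norm (Pr a) < 1)"
      proof (cases "a \<in> T")
        case True
        then obtain u where u: "u \<in> U" "Pr a = norm (Pr a) *\<^sub>R u" using Tdec by blast
        have "a \<bullet> \<delta> = 0" using ad u ud[OF u(1)] by (metis inner_scaleR_left mult_zero_right)
        then show ?thesis using feas[OF a] g[of a] by auto
      next
        case False
        show ?thesis
        proof (cases "Pr a = 0")
          case True
          then show ?thesis using feas[OF a] g[of a] ad by auto
        next
          case False
          then have "a \<bullet> c + r * norm (Pr a) \<noteq> 1" using \<open>a \<notin> T\<close> a by (auto simp: T_def)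
          then show ?thesis using feas[OF a] by auto
        qed
      qed
    qed
    obtain t1 where t1: "t1 > 0" "\<forall>s. 0 \<le> s \<and> s \<le> t1 \<longrightarrow> (\<forall>a\<in>A. (a \<bullet> c + r * norm (Pr a)) + s * (a \<bullet> \<delta>) \<le> 1)"
      using small_t[OF finA, of "\<lambda>a. a \<bullet> c + r * norm (Pr a)" "\<lambda>a. a \<bullet> \<delta>"] cond[of "\<lambda>a. a \<bullet> \<delta>"] by blast
    obtain t2 where t2: "t2 > 0" "\<forall>s. 0 \<le> s \<and> s \<le> t2 \<longrightarrow> (\<forall>a\<in>A. (a \<bullet> c + r * norm (Pr a)) + s * (- (a \<bullet> \<delta>)) \<le> 1)"
      using small_t[OF finA, of "\<lambda>a. a \<bullet> c + r * norm (Pr a)" "\<lambda>a. - (a \<bullet> \<delta>)"] cond[of "\<lambda>a. - (a \<bullet> \<delta>)"] by blast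
    define t where "t = min t1 t2"
    have t: "t > 0" "t \<le> t1" "t \<le> t2" using t1 t2 by (auto simp: t_def)
    have p1: "(c + t *\<^sub>R \<delta>, r) \<in> Sf"
    proof -
      have "\<forall>a\<in>A. a \<bullet> (c + t *\<^sub>R \<delta>) + r * norm (Pr a) \<le> 1"
        using t1(2) t by (auto simp: inner_add_right algebra_simps)
      then show ?thesis using fc fd cr by (auto simp: Sf_def inner_add_right)
    qed
    have p2: "(c - t *\<^sub>R \<delta>, r) \<in> Sf"
    proof -
      have "\<forall>a\<in>A. a \<bullet> (c - t *\<^sub>R \<delta>) + r * norm (Pr a) \<le> 1"
        using t2(2) t by (auto simp: inner_diff_right algebra_simps)
      then show ?thesis using fc fd cr by (auto simp: Sf_def inner_diff_right)
    qed
    have n1: "norm (c + t *\<^sub>R \<delta>) \<le> norm c" using cmax[OF p1] .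
    have n2: "norm (c - t *\<^sub>R \<delta>) \<le> norm c" using cmax[OF p2] .
    have "(norm (c + t *\<^sub>R \<delta>))\<^sup>2 + (norm (c - t *\<^sub>R \<delta>))\<^sup>2 = 2 * (norm c)\<^sup>2 + 2 * t\<^sup>2 * (norm \<delta>)\<^sup>2"
      by (simp only: power2_norm_eq_inner)
        (simp add: inner_add_left inner_add_right inner_diff_left inner_diff_right
          inner_commute[of \<delta> c] power2_eq_square algebra_simps)
    moreover have "(norm (c + t *\<^sub>R \<delta>))\<^sup>2 \<le> (norm c)\<^sup>2" using n1 by (simp add: power_mono)
    moreover have "(norm (c - t *\<^sub>R \<delta>))\<^sup>2 \<le> (norm c)\<^sup>2" using n2 by (simp add: power_mono)
    moreover have "t\<^sup>2 * (norm \<delta>)\<^sup>2 > 0" using t \<delta>(1) by simp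
    ultimately show False by linarith
  next
    case True
    have cardle: "card (insert f U) \<le> DIM('a)" using small finU by (simp add: card_insert_if)
    have "independent (insert f U)"
      by (rule card_le_dim_spanning[of _ UNIV]) (use True finU cardle in auto)
    then have indU: "independent U" by (rule independent_mono) auto
    have Une: "U \<noteq> {}"
    proof
      assume "U = {}"
      then have "span {f} = UNIV" using True by simp
      then have "dim {f} = DIM('a)" using dim_eq_full by blast
      moreover have "dim {f} \<le> 1" using dim_le_card[of "{f}" "{f}"] by simp
      ultimately show False using dim2 by simp
    qed
    have "0 \<notin> convex hull U"
    proof
      assume "0 \<in> convex hull U"
      then obtain w where w: "\<forall>x\<in>U. 0 \<le> w x" "sum w U = 1" "(\<Sum>x\<in>U. w x *\<^sub>R x) = 0"
        using convex_hull_finite[OF finU] by auto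
      then have "\<exists>v\<in>U. w v \<noteq> 0" by (metis sum.neutral zero_neq_one)
      then have "dependent U" using real_vector.dependent_finite[OF finU] w(3) by blast
      then show False using indU by simp
    qed
    then obtain av bv where ab: "av \<noteq> 0" "0 < bv" "\<forall>x\<in>convex hull U. av \<bullet> x > bv"
      using separating_hyperplane_closed_0[of "convex hull U"] finite_imp_compact_convex_hull[OF finU]
      by (auto simp: compact_imp_closed)
    define \<delta> where "\<delta> = - Pr av"
    have fd: "f \<bullet> \<delta> = 0" using f_Pr by (simp add: \<delta>_def)
    have ud: "u \<bullet> \<delta> < 0" if "u \<in> U" for u
    proof -
      have "av \<bullet> u > 0" using ab(2,3) hull_inc[OF that] by fastforce
      moreover have "av \<bullet> u = Pr av \<bullet> u" using Pr_inner[OF Uf[OF that]] .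
      ultimately show ?thesis by (simp add: \<delta>_def inner_commute)
    qed
    define s where "s = Min ((\<lambda>u. - (u \<bullet> \<delta>)) ` U)"
    have spos: "s > 0" using ud Une finU by (auto simp: s_def)
    have sle: "s \<le> - (u \<bullet> \<delta>)" if "u \<in> U" for u using that finU by (auto simp: s_def)
    have cond: "\<forall>a\<in>A. a \<bullet> c + r * norm (Pr a) \<le> 1 \<and> (a \<bullet> \<delta> + s * norm (Pr a) \<le> 0 \<or> a \<bullet> c + r * norm (Pr a) < 1)"
    proof
      fix a assume a: "a \<in> A"
      have ad: "a \<bullet> \<delta> = Pr a \<bullet> \<delta>" using Pr_inner[OF fd] .
      show "a \<bullet> c + r * norm (Pr a) \<le> 1 \<and> (a \<bullet> \<delta> + s * norm (Pr a) \<le> 0 \<or> a \<bullet> c + r * norm (Pr a) < 1)"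
      proof (cases "a \<in> T")
        case True
        then obtain u where u: "u \<in> U" "Pr a = norm (Pr a) *\<^sub>R u" using Tdec by blast
        have "a \<bullet> \<delta> = norm (Pr a) * (u \<bullet> \<delta>)" using ad u by (metis inner_scaleR_left)
        then have "a \<bullet> \<delta> + s * norm (Pr a) = norm (Pr a) * (u \<bullet> \<delta> + s)" by (simp add: algebra_simps)
        moreover have "u \<bullet> \<delta> + s \<le> 0" using sle[OF u(1)] by simp
        ultimately have "a \<bullet> \<delta> + s * norm (Pr a) \<le> 0" by (simp add: mult_nonneg_nonpos)
        then show ?thesis using feas[OF a] by auto
      next
        case False
        show ?thesis
        proof (cases "Pr a = 0")
          case True
          then show ?thesis using feas[OF a] ad by auto
        next
          case False
          then have "a \<bullet> c + r * norm (Pr a) \<noteq> 1" using \<open>a \<notin> T\<close> a by (auto simp: T_def)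
          then show ?thesis using feas[OF a] by auto
        qed
      qed
    qed
    obtain t where t: "t > 0" "\<forall>s'. 0 \<le> s' \<and> s' \<le> t \<longrightarrow> (\<forall>a\<in>A. (a \<bullet> c + r * norm (Pr a)) + s' * (a \<bullet> \<delta> + s * norm (Pr a)) \<le> 1)"
      using small_t[OF finA, of "\<lambda>a. a \<bullet> c + r * norm (Pr a)" "\<lambda>a. a \<bullet> \<delta> + s * norm (Pr a)"] cond by blast
    have "(c + t *\<^sub>R \<delta>, r + t * s) \<in> Sf"
    proof -
      have h: "\<forall>a\<in>A. (a \<bullet> c + r * norm (Pr a)) + t * (a \<bullet> \<delta> + s * norm (Pr a)) \<le> 1"
        using t by auto
      have "a \<bullet> (c + t *\<^sub>R \<delta>) + (r + t * s) * norm (Pr a) = (a \<bullet> c + r * norm (Pr a)) + t * (a \<bullet> \<delta> + s * norm (Pr a))" for a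
        by (simp add: inner_add_right algebra_simps)
      then have "\<forall>a\<in>A. a \<bullet> (c + t *\<^sub>R \<delta>) + (r + t * s) * norm (Pr a) \<le> 1"
        using h by simp
      then show ?thesis using fc fd cr t spos by (auto simp: Sf_def inner_add_right)
    qed
    then have "r + t * s \<le> r" by (rule rmax)
    moreover have "t * s > 0" using t(1) spos by simp
    ultimately show False by simp
  qed
qed

end


context msetup
begin

lemma construct: "\<exists>S. finite S \<and> is_Mset nrm S \<and> card S = DIM('a) + 1"
proof -
  obtain c r where cr: "(c, r) \<in> Sf" "r > 0" and rmax: "\<And>c' r'. (c', r') \<in> Sf \<Longrightarrow> r' \<le> r"
    and cmax: "\<And>c'. (c', r) \<in> Sf \<Longrightarrow> norm c' \<le> norm c"
    using exists_opt by blast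
  define T where "T = {a\<in>A. Pr a \<noteq> 0 \<and> a \<bullet> c + r * norm (Pr a) = 1}"
  define U where "U = (\<lambda>a. (1 / norm (Pr a)) *\<^sub>R Pr a) ` T"
  have cardU: "DIM('a) \<le> card U"
    unfolding T_def U_def
  proof (rule key[OF cr])
    show "\<And>c' r'. (c', r') \<in> Sf \<Longrightarrow> r' \<le> r" by (rule rmax)
    show "\<And>c'. (c', r) \<in> Sf \<Longrightarrow> norm c' \<le> norm c" by (rule cmax)
  qed
  obtain U' where U': "U' \<subseteq> U" "card U' = DIM('a)" "finite U'"
    using obtain_subset_with_card_n[OF cardU] by blast
  have fc: "f \<bullet> c = 1" using cr by (auto simp: Sf_def)
  have Uprop: "f \<bullet> u = 0 \<and> norm u = 1 \<and> (\<exists>a\<in>A. a \<bullet> c + r * norm (Pr a) = 1 \<and> Pr a \<noteq> 0 \<and> a \<bullet> u = norm (Pr a))"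
    if uU: "u \<in> U" for u
  proof -
    obtain a where a: "a \<in> T" "u = (1 / norm (Pr a)) *\<^sub>R Pr a" using uU unfolding U_def by blast
    have fu: "f \<bullet> u = 0" using a f_Pr by simp
    moreover have "norm u = 1" using a by (simp add: T_def)
    moreover have "a \<bullet> u = Pr a \<bullet> u" using Pr_inner[OF fu] .
    then have "a \<bullet> u = norm (Pr a)" using a by (simp add: T_def power2_norm_eq_inner[symmetric] power2_eq_square)
    ultimately show ?thesis using a by (auto simp: T_def)
  qed
  define Q where "Q = {p. fst p \<in> U' \<and> snd p \<in> U' \<and> fst p \<noteq> snd p}"
  have finQ: "finite Q"
  proof -
    have "Q \<subseteq> U' \<times> U'" by (auto simp: Q_def)
    then show ?thesis using U'(3) finite_subset by blast
  qed
  have lt2: "norm (u + w) < 2" if "u \<in> U" "w \<in> U" "u \<noteq> w" for u w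
  proof -
    have nu: "norm u = 1" "norm w = 1" using Uprop that by auto
    have "norm (u + w) \<le> 2" using norm_triangle_ineq[of u w] nu by simp
    moreover have "norm (u + w) \<noteq> norm u + norm w" using norm_triangle_eq[of u w] nu that by simp
    ultimately show ?thesis using nu by simp
  qed
  have "\<forall>p\<in>Q. norm (fst p + snd p) / 2 \<le> 1 \<and> (norm (fst p + snd p) / 2 \<le> 0 \<or> norm (fst p + snd p) / 2 < 1)"
    using lt2 U'(1) by (fastforce simp: Q_def)
  then obtain t where t: "t > 0" "\<forall>s. 0 \<le> s \<and> s \<le> t \<longrightarrow> (\<forall>p\<in>Q. norm (fst p + snd p) / 2 + s * (norm (fst p + snd p) / 2) \<le> 1)"
    using small_t[OF finQ, of "\<lambda>p. norm (fst p + snd p) / 2" "\<lambda>p. norm (fst p + snd p) / 2"] by blast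
  define \<epsilon> where "\<epsilon> = min t 1"
  have eps: "\<epsilon> > 0" "\<epsilon> \<le> 1" "\<epsilon> \<le> t" using t by (auto simp: \<epsilon>_def)
  have pair: "(1 + \<epsilon>) * norm (u + w) / 2 \<le> 1" if "u \<in> U'" "w \<in> U'" "u \<noteq> w" for u w
  proof -
    have "(u, w) \<in> Q" using that by (simp add: Q_def)
    moreover have "0 \<le> \<epsilon> \<and> \<epsilon> \<le> t" using eps by simp
    ultimately have "norm (fst (u, w) + snd (u, w)) / 2 + \<epsilon> * (norm (fst (u, w) + snd (u, w)) / 2) \<le> 1"
      using t(2) by blast
    then have "norm (u + w) / 2 + \<epsilon> * (norm (u + w) / 2) \<le> 1" by simp
    then show ?thesis by (simp add: algebra_simps)
  qed
  define X where "X = (\<lambda>u. c + ((1 + \<epsilon>) * r) *\<^sub>R u)"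
  define p where "p = (-3) *\<^sub>R c"
  define S where "S = insert p (X ` U')"
  have nc: "nrm c = 1" using ball_one[of c r 0] cr by simp
  have fX: "f \<bullet> X u = 1" if "u \<in> U" for u using Uprop[OF that] fc by (simp add: X_def inner_add_right)
  have fp: "f \<bullet> p = -3" using fc by (simp add: p_def)
  have injX: "inj_on X U'"
  proof (rule inj_onI)
    fix u w assume "u \<in> U'" "w \<in> U'" "X u = X w"
    then have "((1 + \<epsilon>) * r) *\<^sub>R u = ((1 + \<epsilon>) * r) *\<^sub>R w" by (simp add: X_def)
    moreover have "(1 + \<epsilon>) * r \<noteq> 0" using eps cr by simp
    ultimately show "u = w" by simp
  qed
  have pX: "p \<notin> X ` U'" using fX fp U'(1) by force
  have cardS: "card S = DIM('a) + 1"
    using pX injX U' by (simp add: S_def card_image)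
  have mid: "nrm m = 1" if mS: "m \<in> midpoint_set S" for m
  proof -
    obtain x y where xy: "m = (1/2) *\<^sub>R (x + y)" "x \<in> S" "y \<in> S" "x \<noteq> y"
      using mS unfolding midpoint_set_def by blast
    have half: "nrm ((1/2) *\<^sub>R (p + X u)) = 1" if u: "u \<in> U'" for u
    proof -
      define v where "v = (- ((1 + \<epsilon>) * r / 2)) *\<^sub>R u"
      have uu: "f \<bullet> u = 0" "norm u = 1" using Uprop U'(1) u by auto
      have "(1/2) *\<^sub>R (p + X u) = - (c + v)"
        by (rule euclidean_eqI) (simp add: p_def X_def v_def inner_add_left algebra_simps)
      moreover have "nrm (c + v) = 1"
        by (rule ball_one[OF cr(1)]) (use uu eps cr in \<open>auto simp: v_def\<close>)
      ultimately show ?thesis using isn_neg[OF N, of "c + v"] by (simp only:)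
    qed
    have two: "nrm ((1/2) *\<^sub>R (X u + X w)) = 1" if u: "u \<in> U'" "w \<in> U'" "u \<noteq> w" for u w
    proof -
      define v where "v = ((1 + \<epsilon>) * r / 2) *\<^sub>R (u + w)"
      have uu: "f \<bullet> u = 0" "f \<bullet> w = 0" using Uprop U'(1) u by auto
      have "(1/2) *\<^sub>R (X u + X w) = c + v"
        by (rule euclidean_eqI) (simp add: X_def v_def inner_add_left algebra_simps add_divide_distrib)
      moreover have "norm v \<le> r"
      proof -
        have "norm v = r * ((1 + \<epsilon>) * norm (u + w) / 2)" using eps cr by (simp add: v_def)
        also have "\<dots> \<le> r * 1" using pair[OF u] cr by (intro mult_left_mono) auto
        finally show ?thesis by simp
      qed
      moreover have "f \<bullet> v = 0" using uu by (simp add: v_def inner_add_right)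
      ultimately show ?thesis using ball_one[OF cr(1)] by simp
    qed
    show ?thesis
    proof (cases "x = p")
      case True
      then obtain u where "u \<in> U'" "y = X u" using xy by (auto simp: S_def)
      then show ?thesis using half xy True by simp
    next
      case False
      then obtain u where u: "u \<in> U'" "x = X u" using xy by (auto simp: S_def)
      show ?thesis
      proof (cases "y = p")
        case True
        then show ?thesis using half[OF u(1)] xy u by (simp add: add.commute)
      next
        case False
        then obtain w where w: "w \<in> U'" "y = X w" using xy by (auto simp: S_def)
        then have "u \<noteq> w" using u xy by auto
        then show ?thesis using two[OF u(1) w(1)] xy u w by simp
      qed
    qed
  qed
  have big: "nrm x > 1" if xS: "x \<in> S" for x
  proof (cases "x = p")
    case True
    have "nrm p = 3" using nc isn_scale[OF N, of "-3" c] by (simp add: p_def)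
    then show ?thesis using True by simp
  next
    case False
    then obtain u where u: "u \<in> U'" "x = X u" using xS by (auto simp: S_def)
    obtain a where a: "a \<in> A" "a \<bullet> c + r * norm (Pr a) = 1" "Pr a \<noteq> 0" "a \<bullet> u = norm (Pr a)"
      using Uprop U'(1) u(1) by blast
    have "a \<bullet> x = a \<bullet> c + (1 + \<epsilon>) * r * norm (Pr a)" using a u by (simp add: X_def inner_add_right)
    also have "\<dots> = 1 + \<epsilon> * r * norm (Pr a)" using a(2) by (simp add: algebra_simps)
    finally have "a \<bullet> x > 1" using eps cr a(3) by simp
    then show ?thesis using lge[OF a(1), of x] by simp
  qed
  have "finite S" using U'(3) by (simp add: S_def)
  moreover have "is_Mset nrm S" using mid big by (simp add: is_Mset_def)
  ultimately show ?thesis using cardS by blast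
qed

end


lemma dim_one_case:
  fixes nrm :: "'a::euclidean_space \<Rightarrow> real"
  assumes N: "is_norm nrm"
  shows "\<exists>S. finite S \<and> is_Mset nrm S \<and> card S = 2"
proof -
  obtain e :: 'a where e: "e \<in> Basis" using nonempty_Basis by blast
  then have e0: "e \<noteq> 0" by auto
  have ne: "nrm e > 0" using isn_pos[OF N e0] .
  define u where "u = (1 / nrm e) *\<^sub>R e"
  have nu: "nrm u = 1" using ne by (simp add: u_def isn_scale[OF N])
  have u0: "u \<noteq> 0" using nu isn_zero[OF N] by auto
  define x1 where "x1 = 3 *\<^sub>R u"
  define x2 where "x2 = (-5) *\<^sub>R u"
  have ne12: "x1 \<noteq> x2"
  proof
    assume "x1 = x2"
    then have "x1 - x2 = 0" by simp
    moreover have "x1 - x2 = (3 - (-5::real)) *\<^sub>R u" unfolding x1_def x2_def by (rule scaleR_diff_left[symmetric])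
    ultimately have "(3 - (-5::real)) *\<^sub>R u = 0" by simp
    then show False using u0 by simp
  qed
  have n1: "nrm x1 = 3" using nu isn_scale[OF N, of 3 u] by (simp add: x1_def)
  have n2: "nrm x2 = 5" using nu isn_scale[OF N, of "-5" u] by (simp add: x2_def)
  have m12: "(1/2) *\<^sub>R (x1 + x2) = (-1) *\<^sub>R u"
  proof -
    have "x1 + x2 = (3 + (-5::real)) *\<^sub>R u" unfolding x1_def x2_def by (rule scaleR_add_left[symmetric])
    then show ?thesis by simp
  qed
  have nm: "nrm ((-1) *\<^sub>R u) = 1" using nu isn_scale[OF N, of "-1" u] by simp
  have "nrm m = 1" if mm: "m \<in> midpoint_set {x1, x2}" for m
  proof -
    obtain x y where xy: "m = (1/2) *\<^sub>R (x + y)" "x \<in> {x1, x2}" "y \<in> {x1, x2}" "x \<noteq> y"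
      using mm unfolding midpoint_set_def by blast
    have "x + y = x1 + x2"
    proof (cases "x = x1")
      case True
      then have "y = x2" using xy by blast
      then show ?thesis using True by simp
    next
      case False
      then have "x = x2" "y = x1" using xy by blast+
      then show ?thesis by (simp add: add.commute)
    qed
    then show ?thesis using xy(1) m12 nm by simp
  qed
  moreover have "\<forall>x\<in>{x1, x2}. nrm x > 1" using n1 n2 by simp
  ultimately have "is_Mset nrm {x1, x2}" unfolding is_Mset_def by blast
  moreover have "card {x1, x2} = 2" using ne12 by simp
  moreover have "finite {x1, x2}" by simp
  ultimately show ?thesis by blast
qed

theorem mainTheorem18:
  fixes nrm :: "'a::euclidean_space \<Rightarrow> real"
  assumes "is_norm nrm"
    and "polytope {x. nrm x \<le> 1}"
  shows "(\<exists>S. finite S \<and> is_Mset nrm S \<and> card S \<ge> DIM('a) + 1) \<and>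
         m_X nrm \<ge> enat (DIM('a) + 1)"
proof -
  note N = assms(1)
  have bnd: "bounded {x. nrm x \<le> 1}" using polytope_imp_bounded[OF assms(2)] .
  have ex: "\<exists>S. finite S \<and> is_Mset nrm S \<and> card S = DIM('a) + 1"
  proof (cases "DIM('a) = 1")
    case True
    then show ?thesis using dim_one_case[OF N] by (simp add: numeral_2_eq_2)
  next
    case False
    then have dim2: "2 \<le> DIM('a)" using DIM_positive[where 'a='a] by linarith
    obtain A where A: "finite A" "\<forall>x. nrm x \<le> 1 \<longleftrightarrow> (\<forall>a\<in>A. a \<bullet> x \<le> 1)"
       "\<forall>f\<in>A. \<not> (\<forall>x. nrm x \<le> 1 \<longleftrightarrow> (\<forall>a\<in>A - {f}. a \<bullet> x \<le> 1))"
      using rep_minimal[OF rep_exists[OF N assms(2)]] by blast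
    have "A \<noteq> {}"
    proof
      assume "A = {}"
      then have "{x. nrm x \<le> 1} = UNIV" using A(2) by auto
      then show False using bnd not_bounded_UNIV by simp
    qed
    then obtain f where fA: "f \<in> A" by blast
    then obtain y where y: "\<not> (nrm y \<le> 1 \<longleftrightarrow> (\<forall>a\<in>A - {f}. a \<bullet> y \<le> 1))" using A(3) by blast
    have y1: "\<forall>a\<in>A - {f}. a \<bullet> y \<le> 1" and y2: "\<not> nrm y \<le> 1" using y A(2) by auto
    have fy: "f \<bullet> y > 1"
    proof (rule ccontr)
      assume "\<not> f \<bullet> y > 1"
      then have "\<forall>a\<in>A. a \<bullet> y \<le> 1" using y1 by auto
      then show False using A(2) y2 by blast
    qed
    define z where "z = (1 / (f \<bullet> y)) *\<^sub>R y"
    have fz: "f \<bullet> z = 1" using fy by (simp add: z_def)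
    have zA: "a \<bullet> z < 1" if "a \<in> A" "a \<noteq> f" for a
    proof -
      have ay: "a \<bullet> y \<le> 1" using y1 that by auto
      have "a \<bullet> z = (a \<bullet> y) / (f \<bullet> y)" by (simp add: z_def)
      also have "\<dots> < 1" using ay fy by (simp add: divide_less_eq)
      finally show ?thesis .
    qed
    interpret msetup nrm A f z
    proof
      show "is_norm nrm" by (rule N)
      show "finite A" by (rule A(1))
      show "\<And>x. nrm x \<le> 1 \<longleftrightarrow> (\<forall>a\<in>A. a \<bullet> x \<le> 1)" using A(2) by blast
      show "f \<in> A" by (rule fA)
      show "f \<bullet> z = 1" by (rule fz)
      show "\<And>a. a \<in> A \<Longrightarrow> a \<noteq> f \<Longrightarrow> a \<bullet> z < 1" by (rule zA)
      show "2 \<le> DIM('a)" by (rule dim2)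
      show "bounded {x. nrm x \<le> 1}" by (rule bnd)
    qed
    show ?thesis by (rule construct)
  qed
  then obtain S where S: "finite S" "is_Mset nrm S" "card S = DIM('a) + 1" by blast
  have "enat (card S) \<le> m_X nrm"
    unfolding m_X_def using S by (intro Sup_upper) blast
  then show ?thesis using S by auto
qed


end
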